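(* Let $p\ge0$. There is a constant $C_p<\infty$ such that for all $0\le a<b$ and all $u\in H^1(a,b)$ with $u(b)=0$, $$\int_a^b\Big(\frac{u(x)}{b-x}\Big)^2x^p\,dx\le C_p\int_a^b (u'(x))^2x^p\,dx.$$
   Context: $C_p$ depends only on $p$, not on $a$, $b$ or $u$. *)

theory Defs
  imports "HOL-Analysis.Analysis"
begin

text \<open>A function u on [a,b] belongs to H^1(a,b) (continuous representative) with weak
  derivative u': u' is square integrable on [a,b] and u is the indefinite integral of u'.\<close>
definition H1_on :: "real \<Rightarrow> real \<Rightarrow> (real \<Rightarrow> real) \<Rightarrow> (real \<Rightarrow> real) \<Rightarrow> bool" where
  "H1_on a b u u' \<longleftrightarrow>
     set_integrable lborel {a..b} u' \<and>
     set_integrable lborel {a..b} (\<lambda>x. (u' x)\<^sup>2) \<and>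
     (\<forall>x\<in>{a..b}. u x = u a + (LBINT t=a..x. u' t))"

end

theory Submission
  imports Defs
begin



lemma pw_bound:
  assumes H: "H1_on a b u u'" and ub: "u b = 0" and ax: "a \<le> x" and xb: "x < b"
  shows "ennreal \<bar>u x\<bar> \<le> (\<integral>\<^sup>+ t. indicator {x<..<b} t * ennreal \<bar>u' t\<bar> \<partial>lborel)"
proof -
  have I: "set_integrable lborel {a..b} u'" using H unfolding H1_on_def by blast
  have Iab: "interval_lebesgue_integrable lborel (ereal a) (ereal b) u'"
    unfolding interval_lebesgue_integrable_def using ax xb
    by (auto intro!: set_integrable_subset[OF I])
  have sum: "(LBINT t=a..x. u' t) + (LBINT t=x..b. u' t) = (LBINT t=a..b. u' t)"
  proof (rule interval_integral_sum)
    have "min (ereal a) (min (ereal x) (ereal b)) = ereal a" "max (ereal a) (max (ereal x) (ereal b)) = ereal b"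
      using ax xb by auto
    then show "interval_lebesgue_integrable lborel (min (ereal a) (min (ereal x) (ereal b))) (max (ereal a) (max (ereal x) (ereal b))) u'"
      using Iab by simp
  qed
  have ux: "u x = u a + (LBINT t=a..x. u' t)" and ubb: "u b = u a + (LBINT t=a..b. u' t)"
  proof -
    have A: "\<forall>y\<in>{a..b}. u y = u a + (LBINT t=a..y. u' t)" using H unfolding H1_on_def by blast
    show "u x = u a + (LBINT t=a..x. u' t)" using bspec[OF A, of x] ax xb by simp
    show "u b = u a + (LBINT t=a..b. u' t)" using bspec[OF A, of b] ax xb by simp
  qed
  have e: "u x = - (LBINT t=x..b. u' t)" using sum ux ubb ub by simp
  have Ixb: "set_integrable lborel {x<..<b} u'"
    using ax xb by (auto intro!: set_integrable_subset[OF I])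
  have e2: "(LBINT t=x..b. u' t) = (LBINT t:{x<..<b}. u' t)"
    using xb by (simp add: interval_lebesgue_integral_le_eq)
  have "\<bar>u x\<bar> \<le> (LBINT t:{x<..<b}. norm (u' t))"
    using set_integral_norm_bound[OF Ixb] e e2 by simp
  also have "\<dots> = (LBINT t:{x<..<b}. \<bar>u' t\<bar>)" by simp
  finally have le: "\<bar>u x\<bar> \<le> (LBINT t:{x<..<b}. \<bar>u' t\<bar>)" .
  have Ia: "integrable lborel (\<lambda>t. indicator {x<..<b} t * \<bar>u' t\<bar>)"
    using set_integrable_abs[OF Ixb] unfolding set_integrable_def by simp
  have "(\<integral>\<^sup>+ t. indicator {x<..<b} t * ennreal \<bar>u' t\<bar> \<partial>lborel)
      = (\<integral>\<^sup>+ t. ennreal (indicator {x<..<b} t * \<bar>u' t\<bar>) \<partial>lborel)"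
    by (intro nn_integral_cong) (simp split: split_indicator)
  also have "\<dots> = ennreal (LBINT t:{x<..<b}. \<bar>u' t\<bar>)"
    unfolding set_lebesgue_integral_def
    by (subst nn_integral_eq_integral[OF Ia]) auto
  finally show ?thesis using le by (simp add: ennreal_leI)
qed


lemma int1:
  assumes xb: "x < b"
  shows "(\<integral>\<^sup>+ t. indicator {x<..<b} t * ennreal ((b-t) powr (-1/2)) \<partial>lborel) \<le> ennreal (2 * sqrt (b-x))"
proof -
  have hi: "((\<lambda>t. (b-t) powr (-1/2)) has_integral ((-2 * sqrt (b-b)) - (-2 * sqrt (b-x)))) {x..b}"
  proof (rule fundamental_theorem_of_calculus_interior)
    show "x \<le> b" using xb by simp
    show "continuous_on {x..b} (\<lambda>t. -2 * sqrt (b-t))"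
      by (intro continuous_intros)
    fix t assume t: "t \<in> {x<..<b}"
    have d1: "((\<lambda>t. b - t) has_real_derivative (0 - 1)) (at t)"
      by (intro derivative_eq_intros) auto
    have d2: "(sqrt has_real_derivative (inverse (sqrt (b-t)) / 2)) (at (b - t))"
      using t by (intro DERIV_real_sqrt) auto
    have "((\<lambda>t. -2 * sqrt (b-t)) has_real_derivative (-2 * (inverse (sqrt (b-t)) / 2 * (0 - 1)))) (at t)"
      by (intro DERIV_cmult DERIV_chain2[OF d2 d1])
    moreover have "-2 * (inverse (sqrt (b-t)) / 2 * (0 - 1)) = (b-t) powr (-1/2)"
      using t by (simp add: powr_minus powr_half_sqrt)
    ultimately show "((\<lambda>t. -2 * sqrt (b-t)) has_vector_derivative (b-t) powr (-1/2)) (at t)"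
      by (simp add: has_real_derivative_iff_has_vector_derivative)
  qed
  have val: "(-2 * sqrt (b-b)) - (-2 * sqrt (b-x)) = 2 * sqrt (b-x)"
    by simp
  have eq: "(\<integral>\<^sup>+ t. ennreal (indicator {x..b} t * (b-t) powr (-1/2)) \<partial>lborel) = ennreal (2 * sqrt (b-x))"
    using nn_integral_has_integral_lebesgue[OF _ hi] val by simp
  have "(\<integral>\<^sup>+ t. indicator {x<..<b} t * ennreal ((b-t) powr (-1/2)) \<partial>lborel)
     \<le> (\<integral>\<^sup>+ t. ennreal (indicator {x..b} t * (b-t) powr (-1/2)) \<partial>lborel)"
    by (intro nn_integral_mono) (simp split: split_indicator)
  then show ?thesis using eq by simp
qed

lemma int2:
  assumes at: "a \<le> t" and tb: "t < b"
  shows "(\<integral>\<^sup>+ s. indicator {a..<t} s * ennreal ((b-s) powr (-3/2)) \<partial>lborel) \<le> ennreal (2 * (b-t) powr (-1/2))"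
proof -
  have hi: "((\<lambda>s. (b-s) powr (-3/2)) has_integral ((2 * (b-t) powr (-1/2)) - (2 * (b-a) powr (-1/2)))) {a..t}"
  proof (rule fundamental_theorem_of_calculus_interior)
    show "a \<le> t" using at by simp
    show "continuous_on {a..t} (\<lambda>s. 2 * (b-s) powr (-1/2))"
      using tb by (intro continuous_intros) auto
    fix s assume s: "s \<in> {a<..<t}"
    have "((\<lambda>s. 2 * (b-s) powr (-1/2)) has_real_derivative (2 * ((-1/2) * (b-s) powr (-1/2 - 1) * (0 - 1)))) (at s)"
      using s tb by (intro derivative_eq_intros) auto
    moreover have "2 * ((-1/2) * (b-s) powr (-1/2 - 1) * (0 - 1)) = (b-s) powr (-3/2)" by simp
    ultimately show "((\<lambda>s. 2 * (b-s) powr (-1/2)) has_vector_derivative (b-s) powr (-3/2)) (at s)"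
      by (simp add: has_real_derivative_iff_has_vector_derivative)
  qed
  have eq: "(\<integral>\<^sup>+ s. ennreal (indicator {a..t} s * (b-s) powr (-3/2)) \<partial>lborel) = ennreal ((2 * (b-t) powr (-1/2)) - (2 * (b-a) powr (-1/2)))"
    using nn_integral_has_integral_lebesgue[OF _ hi] by simp
  have "(\<integral>\<^sup>+ s. indicator {a..<t} s * ennreal ((b-s) powr (-3/2)) \<partial>lborel)
     \<le> (\<integral>\<^sup>+ s. ennreal (indicator {a..t} s * (b-s) powr (-3/2)) \<partial>lborel)"
    by (intro nn_integral_mono) (simp split: split_indicator)
  also have "\<dots> \<le> ennreal (2 * (b-t) powr (-1/2))" unfolding eq
    by (intro ennreal_leI) simp
  finally show ?thesis .
qed



lemma pred_ioo[measurable]: "Measurable.pred (borel \<Otimes>\<^sub>M borel) (\<lambda>x::real\<times>real. snd x \<in> {fst x<..<b})"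
  unfolding greaterThanLessThan_iff by measurable

lemma main:
  fixes p a b :: real and u u' :: "real \<Rightarrow> real"
  assumes p: "p \<ge> 0" and a0: "0 \<le> a" and ab: "a < b" and H: "H1_on a b u u'" and ub: "u b = 0"
  shows "(\<integral>\<^sup>+ x\<in>{a..b}. ennreal ((u x / (b - x))\<^sup>2 * x powr p) \<partial>lborel)
             \<le> ennreal 4 * (\<integral>\<^sup>+ x\<in>{a..b}. ennreal ((u' x)\<^sup>2 * x powr p) \<partial>lborel)"
proof -
  define U where "U t = indicator {a..b} t * u' t" for t
  define g where "g t = \<bar>U t\<bar> * sqrt (t powr p)" for t
  have I: "set_integrable lborel {a..b} u'" using H unfolding H1_on_def by blast
  have Um: "U \<in> borel_measurable lborel"
    using borel_measurable_integrable[OF I[unfolded set_integrable_def]] unfolding U_def by simp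
  have [measurable]: "U \<in> borel_measurable borel"
    using Um by (simp add: measurable_lborel1)
  have [measurable]: "g \<in> borel_measurable borel" unfolding g_def by measurable
  have g0: "g t \<ge> 0" for t unfolding g_def by simp
  have g2: "(g t)\<^sup>2 = (U t)\<^sup>2 * t powr p" for t
    unfolding g_def by (simp add: power_mult_distrib)
  have stepA: "ennreal ((u x / (b - x))\<^sup>2 * x powr p)
      \<le> ennreal (1 / (b-x)\<^sup>2) * (\<integral>\<^sup>+ t. indicator {x<..<b} t * ennreal (g t) \<partial>lborel)\<^sup>2"
    if x: "a \<le> x" "x < b" for x
  proof -
    have x0: "0 \<le> x" using x a0 by simp
    have pb: "ennreal \<bar>u x\<bar> \<le> (\<integral>\<^sup>+ t. indicator {x<..<b} t * ennreal \<bar>u' t\<bar> \<partial>lborel)"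
      by (rule pw_bound[OF H ub x])
    also have "\<dots> = (\<integral>\<^sup>+ t. indicator {x<..<b} t * ennreal \<bar>U t\<bar> \<partial>lborel)"
      using x by (intro nn_integral_cong) (auto simp: U_def split: split_indicator)
    finally have pb2: "ennreal \<bar>u x\<bar> \<le> (\<integral>\<^sup>+ t. indicator {x<..<b} t * ennreal \<bar>U t\<bar> \<partial>lborel)" .
    have "ennreal (\<bar>u x\<bar> * sqrt (x powr p)) = ennreal \<bar>u x\<bar> * ennreal (sqrt (x powr p))"
      by (simp add: ennreal_mult)
    also have "\<dots> \<le> (\<integral>\<^sup>+ t. indicator {x<..<b} t * ennreal \<bar>U t\<bar> \<partial>lborel) * ennreal (sqrt (x powr p))"
      by (intro mult_right_mono pb2) simp
    also have "\<dots> = (\<integral>\<^sup>+ t. indicator {x<..<b} t * ennreal \<bar>U t\<bar> * ennreal (sqrt (x powr p)) \<partial>lborel)"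
      by (rule nn_integral_multc[symmetric]) measurable
    also have "\<dots> \<le> (\<integral>\<^sup>+ t. indicator {x<..<b} t * ennreal (g t) \<partial>lborel)"
    proof (intro nn_integral_mono)
      fix t
      show "indicator {x<..<b} t * ennreal \<bar>U t\<bar> * ennreal (sqrt (x powr p)) \<le> indicator {x<..<b} t * ennreal (g t)"
      proof (cases "t \<in> {x<..<b}")
        case True
        then have "x powr p \<le> t powr p" using x0 p by (intro powr_mono2) auto
        then have "\<bar>U t\<bar> * sqrt (x powr p) \<le> g t" unfolding g_def
          by (intro mult_left_mono) auto
        then have "ennreal \<bar>U t\<bar> * ennreal (sqrt (x powr p)) \<le> ennreal (g t)"
          by (simp add: ennreal_mult[symmetric] ennreal_leI)
        then show ?thesis using True by simp
      qed simp
    qed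
    finally have le1: "ennreal (\<bar>u x\<bar> * sqrt (x powr p)) \<le> (\<integral>\<^sup>+ t. indicator {x<..<b} t * ennreal (g t) \<partial>lborel)" .
    have "ennreal ((\<bar>u x\<bar> * sqrt (x powr p))\<^sup>2) = (ennreal (\<bar>u x\<bar> * sqrt (x powr p)))\<^sup>2"
      by (simp add: ennreal_power)
    also have "\<dots> \<le> (\<integral>\<^sup>+ t. indicator {x<..<b} t * ennreal (g t) \<partial>lborel)\<^sup>2"
      by (intro power_mono le1) simp
    finally have le2: "ennreal ((\<bar>u x\<bar> * sqrt (x powr p))\<^sup>2) \<le> (\<integral>\<^sup>+ t. indicator {x<..<b} t * ennreal (g t) \<partial>lborel)\<^sup>2" .
    have "(u x / (b - x))\<^sup>2 * x powr p = 1 / (b-x)\<^sup>2 * (\<bar>u x\<bar> * sqrt (x powr p))\<^sup>2"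
      by (simp add: power_mult_distrib power_divide)
    then have "ennreal ((u x / (b - x))\<^sup>2 * x powr p) = ennreal (1 / (b-x)\<^sup>2) * ennreal ((\<bar>u x\<bar> * sqrt (x powr p))\<^sup>2)"
      by (metis ennreal_mult zero_le_power2 divide_nonneg_nonneg zero_le_one)
    also have "\<dots> \<le> ennreal (1 / (b-x)\<^sup>2) * (\<integral>\<^sup>+ t. indicator {x<..<b} t * ennreal (g t) \<partial>lborel)\<^sup>2"
      by (intro mult_left_mono le2) simp
    finally show ?thesis .
  qed
  have stepB: "(\<integral>\<^sup>+ t. indicator {x<..<b} t * ennreal (g t) \<partial>lborel)\<^sup>2
      \<le> (\<integral>\<^sup>+ t. indicator {x<..<b} t * ennreal ((g t)\<^sup>2 * (b-t) powr (1/2)) \<partial>lborel) * ennreal (2 * sqrt (b-x))"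
    if x: "a \<le> x" "x < b" for x
  proof -
    define f where "f t = indicator {x<..<b} t * ennreal (g t * (b-t) powr (1/4))" for t
    define h where "h t = indicator {x<..<b} t * ennreal ((b-t) powr (-1/4))" for t
    have [measurable]: "f \<in> borel_measurable lborel" unfolding f_def by measurable
    have [measurable]: "h \<in> borel_measurable lborel" unfolding h_def by measurable
    have fh: "indicator {x<..<b} t * ennreal (g t) = f t * h t" for t
    proof (cases "t \<in> {x<..<b}")
      case True
      then have c: "b - t > 0" by simp
      have "g t * (b-t) powr (1/4) * (b-t) powr (-1/4) = g t * (b-t) powr (1/4 + -1/4)"
        by (simp only: mult.assoc powr_add)
      also have "\<dots> = g t" using c by simp
      finally have "ennreal (g t) = ennreal (g t * (b-t) powr (1/4)) * ennreal ((b-t) powr (-1/4))"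
        by (metis ennreal_mult g0 powr_ge_zero mult_nonneg_nonneg)
      then show ?thesis using True unfolding f_def h_def by simp
    qed (simp add: f_def h_def)
    have f2: "(f t)\<^sup>2 = indicator {x<..<b} t * ennreal ((g t)\<^sup>2 * (b-t) powr (1/2))" for t
    proof -
      have "(g t * (b-t) powr (1/4))\<^sup>2 = (g t)\<^sup>2 * (b-t) powr (1/4 + 1/4)"
        by (simp only: power2_eq_square powr_add ac_simps)
      then have "(g t * (b-t) powr (1/4))\<^sup>2 = (g t)\<^sup>2 * (b-t) powr (1/2)" by simp
      then have "(ennreal (g t * (b-t) powr (1/4)))\<^sup>2 = ennreal ((g t)\<^sup>2 * (b-t) powr (1/2))"
        by (metis ennreal_power g0 powr_ge_zero mult_nonneg_nonneg)
      then show ?thesis unfolding f_def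
        by (simp add: power_mult_distrib split: split_indicator)
    qed
    have h2: "(h t)\<^sup>2 = indicator {x<..<b} t * ennreal ((b-t) powr (-1/2))" for t
    proof -
      have "((b-t) powr (-1/4))\<^sup>2 = (b-t) powr (-1/4 + -1/4)"
        by (simp only: power2_eq_square powr_add)
      then have "((b-t) powr (-1/4))\<^sup>2 = (b-t) powr (-1/2)" by simp
      then have "(ennreal ((b-t) powr (-1/4)))\<^sup>2 = ennreal ((b-t) powr (-1/2))"
        by (metis ennreal_power powr_ge_zero)
      then show ?thesis unfolding h_def
        by (simp add: power_mult_distrib split: split_indicator)
    qed
    have "(\<integral>\<^sup>+ t. indicator {x<..<b} t * ennreal (g t) \<partial>lborel)\<^sup>2 = (\<integral>\<^sup>+ t. f t * h t \<partial>lborel)\<^sup>2"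
      by (simp add: fh)
    also have "\<dots> \<le> (\<integral>\<^sup>+ t. (f t)\<^sup>2 \<partial>lborel) * (\<integral>\<^sup>+ t. (h t)\<^sup>2 \<partial>lborel)"
      by (rule Cauchy_Schwarz_nn_integral) measurable
    also have "\<dots> = (\<integral>\<^sup>+ t. indicator {x<..<b} t * ennreal ((g t)\<^sup>2 * (b-t) powr (1/2)) \<partial>lborel) * (\<integral>\<^sup>+ t. indicator {x<..<b} t * ennreal ((b-t) powr (-1/2)) \<partial>lborel)"
      by (simp add: f2 h2)
    also have "\<dots> \<le> (\<integral>\<^sup>+ t. indicator {x<..<b} t * ennreal ((g t)\<^sup>2 * (b-t) powr (1/2)) \<partial>lborel) * ennreal (2 * sqrt (b-x))"
      by (intro mult_left_mono int1 x) simp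
    finally show ?thesis .
  qed
  have AB: "ennreal ((u x / (b - x))\<^sup>2 * x powr p)
      \<le> ennreal (2 * (b-x) powr (-3/2)) * (\<integral>\<^sup>+ t. indicator {x<..<b} t * ennreal ((g t)\<^sup>2 * (b-t) powr (1/2)) \<partial>lborel)"
    if x: "a \<le> x" "x < b" for x
  proof -
    define J where "J = (\<integral>\<^sup>+ t. indicator {x<..<b} t * ennreal ((g t)\<^sup>2 * (b-t) powr (1/2)) \<partial>lborel)"
    have c: "b - x > 0" using x by simp
    have "(b-x) powr (-3/2) = (b-x) powr (1/2 - 2)" by simp
    also have "\<dots> = (b-x) powr (1/2) / (b-x) powr 2" by (rule powr_diff)
    also have "\<dots> = sqrt (b-x) / (b-x)\<^sup>2" using c by (simp add: powr_half_sqrt powr_numeral)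
    finally have r: "1 / (b-x)\<^sup>2 * (2 * sqrt (b-x)) = 2 * (b-x) powr (-3/2)" by simp
    have "ennreal ((u x / (b - x))\<^sup>2 * x powr p) \<le> ennreal (1 / (b-x)\<^sup>2) * (\<integral>\<^sup>+ t. indicator {x<..<b} t * ennreal (g t) \<partial>lborel)\<^sup>2"
      by (rule stepA[OF x])
    also have "\<dots> \<le> ennreal (1 / (b-x)\<^sup>2) * (J * ennreal (2 * sqrt (b-x)))"
      unfolding J_def by (intro mult_left_mono stepB[OF x]) simp
    also have "\<dots> = ennreal (1 / (b-x)\<^sup>2 * (2 * sqrt (b-x))) * J"
    proof -
      have m: "ennreal (1 / (b-x)\<^sup>2 * (2 * sqrt (b-x))) = ennreal (1 / (b-x)\<^sup>2) * ennreal (2 * sqrt (b-x))"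
        by (rule ennreal_mult) (use c in auto)
      show ?thesis unfolding m by (simp only: ac_simps)
    qed
    also have "\<dots> = ennreal (2 * (b-x) powr (-3/2)) * J" by (simp only: r)
    finally show ?thesis unfolding J_def .
  qed
  define F where "F x t = indicator {a..<b} x * indicator {x<..<b} t * ennreal (2 * (b-x) powr (-3/2)) * ennreal ((g t)\<^sup>2 * (b-t) powr (1/2))" for x t
  have Fm: "(\<lambda>(x,t). F x t) \<in> borel_measurable (lborel \<Otimes>\<^sub>M lborel)"
    unfolding F_def
    apply (subst measurable_cong_sets[OF sets_pair_measure_cong[OF sets_lborel sets_lborel] refl])
    by measurable
  have "(\<integral>\<^sup>+ x\<in>{a..b}. ennreal ((u x / (b - x))\<^sup>2 * x powr p) \<partial>lborel)
      = (\<integral>\<^sup>+ x. indicator {a..<b} x * ennreal ((u x / (b - x))\<^sup>2 * x powr p) \<partial>lborel)"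
    by (intro nn_integral_cong) (auto split: split_indicator)
  also have "\<dots> \<le> (\<integral>\<^sup>+ x. indicator {a..<b} x * (ennreal (2 * (b-x) powr (-3/2)) * (\<integral>\<^sup>+ t. indicator {x<..<b} t * ennreal ((g t)\<^sup>2 * (b-t) powr (1/2)) \<partial>lborel)) \<partial>lborel)"
    proof (intro nn_integral_mono)
    fix x show "indicator {a..<b} x * ennreal ((u x / (b - x))\<^sup>2 * x powr p) \<le> indicator {a..<b} x * (ennreal (2 * (b-x) powr (-3/2)) * (\<integral>\<^sup>+ t. indicator {x<..<b} t * ennreal ((g t)\<^sup>2 * (b-t) powr (1/2)) \<partial>lborel))"
      using AB[of x] by (cases "x \<in> {a..<b}") auto
  qed
  also have "\<dots> = (\<integral>\<^sup>+ x. (\<integral>\<^sup>+ t. F x t \<partial>lborel) \<partial>lborel)"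
  proof (intro nn_integral_cong)
    fix x
    have "(\<integral>\<^sup>+ t. F x t \<partial>lborel) = (\<integral>\<^sup>+ t. (indicator {a..<b} x * ennreal (2 * (b-x) powr (-3/2))) * (indicator {x<..<b} t * ennreal ((g t)\<^sup>2 * (b-t) powr (1/2))) \<partial>lborel)"
      unfolding F_def by (intro nn_integral_cong) (simp only: ac_simps)
    also have "\<dots> = (indicator {a..<b} x * ennreal (2 * (b-x) powr (-3/2))) * (\<integral>\<^sup>+ t. indicator {x<..<b} t * ennreal ((g t)\<^sup>2 * (b-t) powr (1/2)) \<partial>lborel)"
      by (rule nn_integral_cmult) measurable
    finally show "indicator {a..<b} x * (ennreal (2 * (b-x) powr (-3/2)) * (\<integral>\<^sup>+ t. indicator {x<..<b} t * ennreal ((g t)\<^sup>2 * (b-t) powr (1/2)) \<partial>lborel)) = (\<integral>\<^sup>+ t. F x t \<partial>lborel)"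
      by (simp only: ac_simps)
  qed
  also have "\<dots> = (\<integral>\<^sup>+ t. (\<integral>\<^sup>+ x. F x t \<partial>lborel) \<partial>lborel)"
    using lborel_pair.Fubini'[OF Fm] by simp
  also have "\<dots> = (\<integral>\<^sup>+ t. indicator {a<..<b} t * ennreal ((g t)\<^sup>2 * (b-t) powr (1/2)) * (ennreal 2 * (\<integral>\<^sup>+ x. indicator {a..<t} x * ennreal ((b-x) powr (-3/2)) \<partial>lborel)) \<partial>lborel)"
  proof (intro nn_integral_cong)
    fix t
    have "(\<integral>\<^sup>+ x. F x t \<partial>lborel) = (\<integral>\<^sup>+ x. (indicator {a<..<b} t * ennreal ((g t)\<^sup>2 * (b-t) powr (1/2)) * ennreal 2) * (indicator {a..<t} x * ennreal ((b-x) powr (-3/2))) \<partial>lborel)"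
    proof (intro nn_integral_cong)
      fix x
      have e2: "ennreal (2 * (b-x) powr (-3/2)) = ennreal 2 * ennreal ((b-x) powr (-3/2))"
        by (rule ennreal_mult) auto
      have ii: "indicator {a..<b} x * indicator {x<..<b} t = (indicator {a<..<b} t * indicator {a..<t} x :: ennreal)"
        by (auto split: split_indicator)
      show "F x t = (indicator {a<..<b} t * ennreal ((g t)\<^sup>2 * (b-t) powr (1/2)) * ennreal 2) * (indicator {a..<t} x * ennreal ((b-x) powr (-3/2)))"
        unfolding F_def e2 using ii by (metis (no_types, lifting) ab_semigroup_mult_class.mult_ac(1) mult.commute)
    qed
    also have "\<dots> = (indicator {a<..<b} t * ennreal ((g t)\<^sup>2 * (b-t) powr (1/2)) * ennreal 2) * (\<integral>\<^sup>+ x. indicator {a..<t} x * ennreal ((b-x) powr (-3/2)) \<partial>lborel)"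
      by (rule nn_integral_cmult) measurable
    finally show "(\<integral>\<^sup>+ x. F x t \<partial>lborel) = indicator {a<..<b} t * ennreal ((g t)\<^sup>2 * (b-t) powr (1/2)) * (ennreal 2 * (\<integral>\<^sup>+ x. indicator {a..<t} x * ennreal ((b-x) powr (-3/2)) \<partial>lborel))"
      by (simp only: ac_simps)
  qed
  also have "\<dots> \<le> (\<integral>\<^sup>+ t. indicator {a<..<b} t * ennreal ((g t)\<^sup>2 * (b-t) powr (1/2)) * (ennreal 2 * ennreal (2 * (b-t) powr (-1/2))) \<partial>lborel)"
  proof (intro nn_integral_mono)
    fix t
    show "indicator {a<..<b} t * ennreal ((g t)\<^sup>2 * (b-t) powr (1/2)) * (ennreal 2 * (\<integral>\<^sup>+ x. indicator {a..<t} x * ennreal ((b-x) powr (-3/2)) \<partial>lborel))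
       \<le> indicator {a<..<b} t * ennreal ((g t)\<^sup>2 * (b-t) powr (1/2)) * (ennreal 2 * ennreal (2 * (b-t) powr (-1/2)))"
    proof (cases "t \<in> {a<..<b}")
      case True
      then have "(\<integral>\<^sup>+ x. indicator {a..<t} x * ennreal ((b-x) powr (-3/2)) \<partial>lborel) \<le> ennreal (2 * (b-t) powr (-1/2))"
        by (intro int2) auto
      then show ?thesis by (intro mult_left_mono) auto
    qed simp
  qed
  also have "\<dots> \<le> (\<integral>\<^sup>+ t. ennreal 4 * (ennreal ((U t)\<^sup>2 * t powr p) * indicator {a..b} t) \<partial>lborel)"
  proof (intro nn_integral_mono)
    fix t
    show "indicator {a<..<b} t * ennreal ((g t)\<^sup>2 * (b-t) powr (1/2)) * (ennreal 2 * ennreal (2 * (b-t) powr (-1/2)))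
       \<le> ennreal 4 * (ennreal ((U t)\<^sup>2 * t powr p) * indicator {a..b} t)"
    proof (cases "t \<in> {a<..<b}")
      case True
      then have c: "b - t > 0" by simp
      have r: "(g t)\<^sup>2 * (b-t) powr (1/2) * (2 * (2 * (b-t) powr (-1/2))) = 4 * ((U t)\<^sup>2 * t powr p)"
      proof -
        have "(b-t) powr (1/2) * (b-t) powr (-1/2) = (b-t) powr (1/2 + -1/2)" by (simp only: powr_add)
        also have "\<dots> = 1" using c by simp
        finally have "(b-t) powr (1/2) * (b-t) powr (-1/2) = 1" .
        then show ?thesis unfolding g2 by (simp add: algebra_simps)
      qed
      have "ennreal ((g t)\<^sup>2 * (b-t) powr (1/2)) * (ennreal 2 * ennreal (2 * (b-t) powr (-1/2)))
          = ennreal ((g t)\<^sup>2 * (b-t) powr (1/2) * (2 * (2 * (b-t) powr (-1/2))))"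
        by (simp add: ennreal_mult)
      also have "\<dots> = ennreal 4 * ennreal ((U t)\<^sup>2 * t powr p)" unfolding r by (simp add: ennreal_mult)
      finally show ?thesis using True by simp
    qed simp
  qed
  also have "\<dots> = ennreal 4 * (\<integral>\<^sup>+ x\<in>{a..b}. ennreal ((u' x)\<^sup>2 * x powr p) \<partial>lborel)"
  proof -
    have "(\<integral>\<^sup>+ t. ennreal 4 * (ennreal ((U t)\<^sup>2 * t powr p) * indicator {a..b} t) \<partial>lborel)
       = ennreal 4 * (\<integral>\<^sup>+ t. ennreal ((U t)\<^sup>2 * t powr p) * indicator {a..b} t \<partial>lborel)"
      by (rule nn_integral_cmult) measurable
    also have "(\<integral>\<^sup>+ t. ennreal ((U t)\<^sup>2 * t powr p) * indicator {a..b} t \<partial>lborel) = (\<integral>\<^sup>+ x\<in>{a..b}. ennreal ((u' x)\<^sup>2 * x powr p) \<partial>lborel)"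
      by (intro nn_integral_cong) (simp add: U_def split: split_indicator)
    finally show ?thesis .
  qed
  finally show ?thesis .
qed

theorem lemma4p1:
  fixes p :: real
  assumes "p \<ge> 0"
  shows "\<exists>C::real. \<forall>a b (u::real\<Rightarrow>real) (u'::real\<Rightarrow>real).
           0 \<le> a \<and> a < b \<and> H1_on a b u u' \<and> u b = 0 \<longrightarrow>
           (\<integral>\<^sup>+ x\<in>{a..b}. ennreal ((u x / (b - x))\<^sup>2 * x powr p) \<partial>lborel)
             \<le> ennreal C * (\<integral>\<^sup>+ x\<in>{a..b}. ennreal ((u' x)\<^sup>2 * x powr p) \<partial>lborel)"
  using main[OF assms] by blast

end
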